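(* Let $n\ge3$ and let $Z=(z_1,\dots,z_n)$ be a non-degenerate $n$-gon. Then the 1-forms $\alpha_i=[z_{i+1}-z_i,\,dz_{i+1}+dz_i]$, $i=1,\dots,n$, are linearly independent at $Z$, and the intersection of their kernels at $Z$ equals the fiber $F(Z)$ of the dual Birkhoff distribution $\mathcal F$ at $Z$.
   Context: $[\cdot,\cdot]$ is the determinant of two plane vectors; for $z=(x,y)$, $[z_1,dz_2]$ denotes the 1-form $x_1dy_2-y_1dx_2$. Indices are cyclic. $G_n$ is the set of $n$-gons $(z_1,\dots,z_n)\in(\mathbb R^2)^n$ with $z_i\neq z_{i+1}$ for all $i$. An $n$-gon is non-degenerate if no three consecutive vertices $z_{i-1},z_i,z_{i+1}$ are collinear; the set of these is $U_n\subset G_n$. The dual Birkhoff distribution $\mathcal F$ on $G_n$: a tangent vector $W=(w_1,\dots,w_n)$ (velocities of the vertices) lies in $\mathcal F$ iff for each $i$ the induced motion of the line $z_iz_{i+1}$ is an infinitesimal rotation about the midpoint of $z_iz_{i+1}$; $\mathcal F$ is $n$-dimensional, and $W\in\mathcal F$ iff $[w_i+w_{i+1},z_{i+1}-z_i]=0$ for all $i$. *)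

theory Defs
  imports "HOL-Analysis.Analysis"
begin

text \<open>An n-gon is z :: nat => real*real, vertices
  z 0, ..., z (n-1), indices taken mod n. A tangent vector W is also nat => real*real
  (velocity w i of vertex i, for i < n).\<close>

definition det2 :: "real \<times> real \<Rightarrow> real \<times> real \<Rightarrow> real" where
  "det2 a b = fst a * snd b - snd a * fst b"

definition nxt :: "nat \<Rightarrow> nat \<Rightarrow> nat" where
  "nxt n i = Suc i mod n"

definition prv :: "nat \<Rightarrow> nat \<Rightarrow> nat" where
  "prv n i = (i + n - 1) mod n"

definition is_ngon :: "nat \<Rightarrow> (nat \<Rightarrow> real \<times> real) \<Rightarrow> bool" where
  "is_ngon n z \<longleftrightarrow> (\<forall>i<n. z i \<noteq> z (nxt n i))"

definition nondegenerate :: "nat \<Rightarrow> (nat \<Rightarrow> real \<times> real) \<Rightarrow> bool" where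
  "nondegenerate n z \<longleftrightarrow> is_ngon n z \<and>
     (\<forall>i<n. \<not> collinear {z (prv n i), z i, z (nxt n i)})"

definition alpha :: "nat \<Rightarrow> (nat \<Rightarrow> real \<times> real) \<Rightarrow> nat \<Rightarrow> (nat \<Rightarrow> real \<times> real) \<Rightarrow> real" where
  "alpha n z i W = det2 (z (nxt n i) - z i) (W (nxt n i) + W i)"

text \<open>Fiber of the dual Birkhoff distribution at Z: for each side, the induced motion of the
  line z_i z_{i+1} is an infinitesimal rotation about the midpoint, i.e. the midpoint of the
  side moves with velocity (w_i + w_{i+1})/2 along the line (zero normal velocity of the line
  at the midpoint).\<close>
definition birkhoff_fiber :: "nat \<Rightarrow> (nat \<Rightarrow> real \<times> real) \<Rightarrow> (nat \<Rightarrow> real \<times> real) set" where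
  "birkhoff_fiber n z = {W. \<forall>i<n. \<exists>t::real.
      (1/2) *\<^sub>R (W i + W (nxt n i)) = t *\<^sub>R (z (nxt n i) - z i)}"

end

theory Submission
  imports Defs
begin

lemma det2_add2: "det2 a (b + c) = det2 a b + det2 a c"
  by (simp add: det2_def algebra_simps)
lemma det2_scale2: "det2 a (r *\<^sub>R b) = r * det2 a b"
  by (simp add: det2_def algebra_simps)
lemma det2_zero2[simp]: "det2 a 0 = 0"
  by (simp add: det2_def)

lemma par_decomp:
  assumes "det2 u v = 0" "u \<noteq> 0"
  shows "\<exists>t. v = t *\<^sub>R u"
proof -
  have d: "fst u * snd v - snd u * fst v = 0" using assms by (simp add: det2_def)
  have nz: "fst u ^ 2 + snd u ^ 2 \<noteq> 0" using assms(2)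
    by (simp add: sum_power2_eq_zero_iff prod_eq_iff)
  define t where "t = (fst u * fst v + snd u * snd v) / (fst u ^ 2 + snd u ^ 2)"
  have e1: "fst v * (fst u ^ 2 + snd u ^ 2) = (fst u * fst v + snd u * snd v) * fst u"
  proof -
    have "snd u * fst v = fst u * snd v" using d by simp
    then have "snd u * (snd u * fst v) = snd u * (fst u * snd v)" by (simp only: )
    then show ?thesis by (simp add: power2_eq_square algebra_simps)
  qed
  have e2: "snd v * (fst u ^ 2 + snd u ^ 2) = (fst u * fst v + snd u * snd v) * snd u"
  proof -
    have "snd u * fst v = fst u * snd v" using d by simp
    then have "fst u * (snd u * fst v) = fst u * (fst u * snd v)" by (simp only: )
    then show ?thesis by (simp add: power2_eq_square algebra_simps) (metis)
  qed
  have "v = t *\<^sub>R u"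
    using e1 e2 nz unfolding t_def by (simp add: prod_eq_iff field_simps)
  then show ?thesis by blast
qed

lemma det_zero_collinear:
  assumes "det2 (b - a) (c - b) = 0"
  shows "collinear {a, b, c}"
proof -
  have "collinear {0, a - b, c - b}"
  proof (cases "a - b = 0")
    case True then show ?thesis by (simp add: collinear_2)
  next
    case False
    have "det2 (a - b) (c - b) = 0" using assms by (simp add: det2_def algebra_simps)
    then obtain t where "c - b = t *\<^sub>R (a - b)" using par_decomp False by blast
    then show ?thesis using collinear_lemma by blast
  qed
  then show ?thesis using collinear_3[of a b c] by (simp add: NO_MATCH_def)
qed

lemma det2_vanish: "(\<And>w. det2 v w = 0) \<Longrightarrow> v = 0"
proof -
  assume h: "\<And>w. det2 v w = 0"
  have "det2 v (1,0) = 0" "det2 v (0,1) = 0" using h by auto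
  then show "v = 0" by (simp add: det2_def prod_eq_iff)
qed

theorem lemma2p2:
  fixes n :: nat and z :: "nat \<Rightarrow> real \<times> real"
  assumes "n \<ge> 3" and "nondegenerate n z"
  shows "(\<forall>c :: nat \<Rightarrow> real.
            (\<forall>W. (\<Sum>i<n. c i * alpha n z i W) = 0) \<longrightarrow> (\<forall>i<n. c i = 0))
       \<and> (\<forall>W. (\<forall>i<n. alpha n z i W = 0) \<longleftrightarrow> W \<in> birkhoff_fiber n z)"
proof
  have ng: "\<And>i. i < n \<Longrightarrow> z i \<noteq> z (nxt n i)" using assms(2) by (simp add: nondegenerate_def is_ngon_def)
  have nc: "\<And>i. i < n \<Longrightarrow> \<not> collinear {z (prv n i), z i, z (nxt n i)}"
    using assms(2) by (simp add: nondegenerate_def)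
  have nxtlt: "\<And>i. nxt n i < n" using assms(1) by (simp add: nxt_def)
  have prvlt: "\<And>i. prv n i < n" using assms(1) by (simp add: prv_def)
  have nxtprv: "\<And>j. j < n \<Longrightarrow> nxt n (prv n j) = j"
  proof -
    fix j assume j: "j < n"
    show "nxt n (prv n j) = j"
    proof (cases j)
      case 0 then show ?thesis using assms(1) by (simp add: nxt_def prv_def)
    next
      case (Suc k) then show ?thesis using j by (simp add: nxt_def prv_def)
    qed
  qed
  have prvnxt: "\<And>i j. i < n \<Longrightarrow> nxt n i = j \<Longrightarrow> i = prv n j"
  proof -
    fix i j assume i: "i < n" and e: "nxt n i = j"
    show "i = prv n j"
    proof (cases "Suc i = n")
      case True then show ?thesis using e i by (simp add: nxt_def prv_def)
    next
      case False then have "j = Suc i" using e i by (simp add: nxt_def)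
      then show ?thesis using i by (simp add: prv_def)
    qed
  qed
  have prvne: "\<And>j. j < n \<Longrightarrow> prv n j \<noteq> j"
  proof -
    fix j assume j: "j < n"
    show "prv n j \<noteq> j"
    proof (cases j)
      case 0 then show ?thesis using assms(1) by (simp add: prv_def)
    next
      case (Suc k) then show ?thesis using j by (simp add: prv_def)
    qed
  qed
  show "\<forall>c :: nat \<Rightarrow> real.
            (\<forall>W. (\<Sum>i<n. c i * alpha n z i W) = 0) \<longrightarrow> (\<forall>i<n. c i = 0)"
  proof (intro allI impI)
    fix c :: "nat \<Rightarrow> real" and j
    assume H: "\<forall>W. (\<Sum>i<n. c i * alpha n z i W) = 0" and j: "j < n"
    define p where "p = prv n j"
    define d where "d = (\<lambda>i. z (nxt n i) - z i)"
    have pj: "p \<noteq> j" "p < n" "nxt n p = j" using prvne[OF j] prvlt nxtprv[OF j] by (auto simp: p_def)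
    have key: "det2 (c j *\<^sub>R d j + c p *\<^sub>R d p) w = 0" for w
    proof -
      define W where "W = (\<lambda>k. if k = j then w else (0::real\<times>real))"
      have "(\<Sum>i<n. c i * alpha n z i W) = (\<Sum>i\<in>{j,p}. c i * alpha n z i W)"
      proof (rule sum.mono_neutral_right)
        show "\<forall>i\<in>{..<n} - {j, p}. c i * alpha n z i W = 0"
        proof
          fix i assume "i \<in> {..<n} - {j, p}"
          then have "i < n" "i \<noteq> j" "i \<noteq> p" by auto
          then have "nxt n i \<noteq> j" using prvnxt p_def by blast
          then show "c i * alpha n z i W = 0" using \<open>i \<noteq> j\<close> by (simp add: alpha_def W_def)
        qed
      qed (use j pj in auto)
      also have "\<dots> = c j * alpha n z j W + c p * alpha n z p W" using pj by simp
      also have "\<dots> = c j * det2 (d j) w + c p * det2 (d p) w"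
      proof -
        have "nxt n j \<noteq> j" using j pj prvnxt by metis
        then show ?thesis using pj by (simp add: alpha_def W_def d_def)
      qed
      also have "\<dots> = det2 (c j *\<^sub>R d j + c p *\<^sub>R d p) w" by (simp add: det2_def algebra_simps)
      finally show ?thesis using H by simp
    qed
    have v0: "c j *\<^sub>R d j + c p *\<^sub>R d p = 0" by (rule det2_vanish[OF key])
    have D: "det2 (d p) (d j) \<noteq> 0"
    proof
      assume "det2 (d p) (d j) = 0"
      then have "collinear {z p, z j, z (nxt n j)}"
        using det_zero_collinear pj unfolding d_def by metis
      then show False using nc[OF j] p_def by simp
    qed
    have "det2 (d p) (c j *\<^sub>R d j + c p *\<^sub>R d p) = c j * det2 (d p) (d j)"
      by (simp add: det2_def algebra_simps)
    then show "c j = 0" using v0 D by simp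
  qed
  show "\<forall>W. (\<forall>i<n. alpha n z i W = 0) \<longleftrightarrow> W \<in> birkhoff_fiber n z"
  proof (rule allI, rule iffI)
    fix W assume A: "\<forall>i<n. alpha n z i W = 0"
    show "W \<in> birkhoff_fiber n z" unfolding birkhoff_fiber_def
    proof (intro CollectI allI impI)
      fix i assume i: "i < n"
      have "det2 (z (nxt n i) - z i) (W i + W (nxt n i)) = 0"
        using A i by (simp add: alpha_def add.commute)
      then have "det2 (z (nxt n i) - z i) ((1/2) *\<^sub>R (W i + W (nxt n i))) = 0"
        by (simp only: det2_scale2)
      moreover have "z (nxt n i) - z i \<noteq> 0" using ng[OF i] by simp
      ultimately show "\<exists>t. (1/2) *\<^sub>R (W i + W (nxt n i)) = t *\<^sub>R (z (nxt n i) - z i)"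
        using par_decomp by blast
    qed
  next
    fix W assume B: "W \<in> birkhoff_fiber n z"
    show "\<forall>i<n. alpha n z i W = 0"
    proof (intro allI impI)
      fix i assume i: "i < n"
      obtain t where t: "(1/2) *\<^sub>R (W i + W (nxt n i)) = t *\<^sub>R (z (nxt n i) - z i)"
        using B i unfolding birkhoff_fiber_def by blast
      have "W (nxt n i) + W i = (2*t) *\<^sub>R (z (nxt n i) - z i)"
      proof -
        have "W i + W (nxt n i) = 2 *\<^sub>R ((1/2) *\<^sub>R (W i + W (nxt n i)))" by simp
        then show ?thesis using t by (simp add: add.commute)
      qed
      then show "alpha n z i W = 0" unfolding alpha_def by (simp only: det2_scale2) (simp add: det2_def)
    qed
  qed
qed

end
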